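(* Let $M$ be an $R$-module. Then $M$ satisfies the dual of proper strong Property $\mathcal{A}$ if and only if $M$ satisfies the dual of Property $\mathcal{A}$ and $\mathfrak{m}\cap W_R(M)$ is an ideal of $R$ for every maximal ideal $\mathfrak{m}$ of $R$.
   Context: All rings are commutative with identity. For an $R$-module $M$, $W_R(M)=\{r\in R : rM\neq M\}$. An $R$-module $M$ satisfies the dual of Property $\mathcal{A}$ if for every finitely generated ideal $I$ of $R$ with $I\subseteq W_R(M)$ we have $IM\neq M$. $M$ satisfies the dual of proper strong Property $\mathcal{A}$ if for every proper finitely generated ideal $I=\langle a_1,\dots,a_n\rangle$ of $R$ with $a_i\in W_R(M)$ for all $i$, we have $IM\neq M$. *)

theory Defs
  imports Complex_Main
begin

definition is_ideal :: "'a::comm_ring_1 set \<Rightarrow> bool" where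
  "is_ideal I \<longleftrightarrow> 0 \<in> I \<and> (\<forall>x\<in>I. \<forall>y\<in>I. x + y \<in> I) \<and> (\<forall>r. \<forall>x\<in>I. r * x \<in> I)"

definition maximal_ideal :: "'a::comm_ring_1 set \<Rightarrow> bool" where
  "maximal_ideal m \<longleftrightarrow> is_ideal m \<and> m \<noteq> UNIV \<and>
     (\<forall>J. is_ideal J \<and> m \<subseteq> J \<longrightarrow> J = m \<or> J = UNIV)"

definition gen_ideal :: "'a::comm_ring_1 list \<Rightarrow> 'a set" where
  "gen_ideal as = {\<Sum>i<length as. c i * as ! i | c. True}"

definition fg_ideal :: "'a::comm_ring_1 set \<Rightarrow> bool" where
  "fg_ideal I \<longleftrightarrow> (\<exists>as. I = gen_ideal as)"

text \<open>For an R-module M (the type 'b with scalar multiplication scale):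
  W_R(M) = {r. rM \<noteq> M}.\<close>
definition W_set :: "('a::comm_ring_1 \<Rightarrow> 'b::ab_group_add \<Rightarrow> 'b) \<Rightarrow> 'a set" where
  "W_set scale = {r. range (scale r) \<noteq> UNIV}"

definition ideal_mult :: "('a::comm_ring_1 \<Rightarrow> 'b::ab_group_add \<Rightarrow> 'b) \<Rightarrow> 'a set \<Rightarrow> 'b set" where
  "ideal_mult scale I = module.span scale {scale a m | a m. a \<in> I}"

definition dual_property_A :: "('a::comm_ring_1 \<Rightarrow> 'b::ab_group_add \<Rightarrow> 'b) \<Rightarrow> bool" where
  "dual_property_A scale \<longleftrightarrow>
     (\<forall>I. is_ideal I \<and> fg_ideal I \<and> I \<subseteq> W_set scale \<longrightarrow> ideal_mult scale I \<noteq> UNIV)"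

definition dual_proper_strong_property_A :: "('a::comm_ring_1 \<Rightarrow> 'b::ab_group_add \<Rightarrow> 'b) \<Rightarrow> bool" where
  "dual_proper_strong_property_A scale \<longleftrightarrow>
     (\<forall>as. gen_ideal as \<noteq> UNIV \<and> set as \<subseteq> W_set scale \<longrightarrow>
        ideal_mult scale (gen_ideal as) \<noteq> UNIV)"

end

theory Submission
  imports Defs
begin

lemma ideal_sum:
  assumes "is_ideal I" "finite A" "\<And>i. i \<in> A \<Longrightarrow> f i \<in> I"
  shows "sum f A \<in> I"
  using assms(2,3)
proof (induction A rule: finite_induct)
  case empty then show ?case using assms(1) by (simp add: is_ideal_def)
next
  case (insert x F) then show ?case using assms(1) by (simp add: is_ideal_def)
qed

lemma gen_ideal_ideal: "is_ideal (gen_ideal as)"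
  unfolding is_ideal_def gen_ideal_def
proof (intro conjI ballI allI)
  show "0 \<in> {\<Sum>i<length as. c i * as ! i |c. True}"
    by (rule CollectI, rule exI[of _ "\<lambda>_. 0"]) simp
next
  fix x y assume "x \<in> {\<Sum>i<length as. c i * as ! i |c. True}" "y \<in> {\<Sum>i<length as. c i * as ! i |c. True}"
  then obtain c d where "x = (\<Sum>i<length as. c i * as ! i)" "y = (\<Sum>i<length as. d i * as ! i)" by blast
  then show "x + y \<in> {\<Sum>i<length as. c i * as ! i |c. True}"
    by (intro CollectI exI[of _ "\<lambda>i. c i + d i"]) (simp add: sum.distrib distrib_right)
next
  fix r x assume "x \<in> {\<Sum>i<length as. c i * as ! i |c. True}"
  then obtain c where "x = (\<Sum>i<length as. c i * as ! i)" by blast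
  then show "r * x \<in> {\<Sum>i<length as. c i * as ! i |c. True}"
    by (intro CollectI exI[of _ "\<lambda>i. r * c i"]) (simp add: sum_distrib_left mult.assoc)
qed

lemma gen_ideal_mem: "a \<in> set as \<Longrightarrow> a \<in> gen_ideal as"
proof -
  assume "a \<in> set as"
  then obtain j where j: "j < length as" "as ! j = a" by (auto simp: in_set_conv_nth)
  have "(\<Sum>i<length as. (if i = j then 1 else 0) * as ! i) = as ! j"
  proof -
    have "(\<Sum>i<length as. (if i = j then 1 else 0) * as ! i) = (\<Sum>i<length as. if i = j then as ! j else 0)"
      by (rule sum.cong) auto
    then show ?thesis using j(1) by simp
  qed
  then have "\<exists>c. a = (\<Sum>i<length as. c i * as ! i)" using j(2)
    by (intro exI[of _ "\<lambda>i. if i = j then 1 else 0"]) simp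
  then show ?thesis unfolding gen_ideal_def by blast
qed

lemma gen_ideal_least: "is_ideal J \<Longrightarrow> set as \<subseteq> J \<Longrightarrow> gen_ideal as \<subseteq> J"
proof
  fix x assume J: "is_ideal J" "set as \<subseteq> J" and "x \<in> gen_ideal as"
  then obtain c where x: "x = (\<Sum>i<length as. c i * as ! i)" unfolding gen_ideal_def by blast
  show "x \<in> J" unfolding x
  proof (rule ideal_sum[OF J(1)])
    fix i assume "i \<in> {..<length as}"
    then have "as ! i \<in> J" using J(2) nth_mem by fastforce
    then show "c i * as ! i \<in> J" using J(1) by (simp add: is_ideal_def)
  qed simp
qed

lemma ideal_UNIV: "is_ideal J \<Longrightarrow> J \<noteq> UNIV \<longleftrightarrow> 1 \<notin> J"
proof
  assume J: "is_ideal J" "1 \<notin> J" show "J \<noteq> UNIV" using J by auto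
next
  assume J: "is_ideal J" "J \<noteq> UNIV"
  show "1 \<notin> J"
  proof
    assume "1 \<in> J"
    then have "\<And>r. r * 1 \<in> J" using J(1) by (simp only: is_ideal_def)
    then show False using J(2) by auto
  qed
qed

lemma krull:
  fixes I :: "'a::comm_ring_1 set"
  assumes "is_ideal I" "I \<noteq> UNIV"
  shows "\<exists>m. maximal_ideal m \<and> I \<subseteq> m"
proof -
  define A where "A = {J. is_ideal J \<and> I \<subseteq> J \<and> (1::'a) \<notin> J}"
  have IA: "I \<in> A" using assms ideal_UNIV unfolding A_def by blast
  have "\<exists>M\<in>A. \<forall>X\<in>A. M \<subseteq> X \<longrightarrow> X = M"
  proof (rule subset_Zorn_nonempty)
    show "A \<noteq> {}" using IA by blast
  next
    fix C assume C: "C \<noteq> {}" "subset.chain A C"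
    have CA: "C \<subseteq> A" and ch: "\<And>X Y. X \<in> C \<Longrightarrow> Y \<in> C \<Longrightarrow> X \<subseteq> Y \<or> Y \<subseteq> X"
      using C(2) unfolding subset.chain_def by auto
    obtain X0 where X0: "X0 \<in> C" using C(1) by blast
    have "is_ideal (\<Union>C)" unfolding is_ideal_def
    proof (intro conjI ballI allI)
      show "0 \<in> \<Union>C" using X0 CA unfolding A_def is_ideal_def by blast
    next
      fix x y assume "x \<in> \<Union>C" "y \<in> \<Union>C"
      then obtain X Y where XY: "X \<in> C" "Y \<in> C" "x \<in> X" "y \<in> Y" by blast
      show "x + y \<in> \<Union>C"
      proof (cases "X \<subseteq> Y")
        case True
        then show ?thesis using XY CA unfolding A_def is_ideal_def by blast
      next
        case False
        then have "Y \<subseteq> X" using ch XY by blast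
        then show ?thesis using XY CA unfolding A_def is_ideal_def by blast
      qed
    next
      fix r x assume "x \<in> \<Union>C"
      then obtain X where "X \<in> C" "x \<in> X" by blast
      then show "r * x \<in> \<Union>C" using CA unfolding A_def is_ideal_def by blast
    qed
    moreover have "I \<subseteq> \<Union>C" using X0 CA unfolding A_def by blast
    moreover have "1 \<notin> \<Union>C" using CA unfolding A_def by blast
    ultimately show "\<Union>C \<in> A" unfolding A_def by blast
  qed
  then obtain M where M: "M \<in> A" "\<And>X. X \<in> A \<Longrightarrow> M \<subseteq> X \<Longrightarrow> X = M" by blast
  have "maximal_ideal M" unfolding maximal_ideal_def
  proof (intro conjI allI impI)
    show "is_ideal M" using M unfolding A_def by blast
    show "M \<noteq> UNIV" using M unfolding A_def by blast
  next
    fix J assume J: "is_ideal J \<and> M \<subseteq> J"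
    show "J = M \<or> J = UNIV"
    proof (cases "J = UNIV")
      case False
      then have "1 \<notin> J" using ideal_UNIV J by blast
      then have "J \<in> A" using J M(1) unfolding A_def by blast
      then show ?thesis using M(2) J by blast
    qed simp
  qed
  moreover have "I \<subseteq> M" using M unfolding A_def by blast
  ultimately show ?thesis by blast
qed

lemma ideal_zero: "is_ideal I \<Longrightarrow> 0 \<in> I" by (simp add: is_ideal_def)
lemma ideal_add: "is_ideal I \<Longrightarrow> x \<in> I \<Longrightarrow> y \<in> I \<Longrightarrow> x + y \<in> I" by (simp add: is_ideal_def)
lemma ideal_mul: "is_ideal I \<Longrightarrow> x \<in> I \<Longrightarrow> r * x \<in> I" by (simp add: is_ideal_def)

lemma range_sub_ideal_mult:
  assumes "module scale" "a \<in> I"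
  shows "range (scale a) \<subseteq> ideal_mult scale I"
  unfolding ideal_mult_def
proof
  fix y assume "y \<in> range (scale a)"
  then obtain m where "y = scale a m" by blast
  then have "y \<in> {scale a m | a m. a \<in> I}" using assms(2) by blast
  then show "y \<in> module.span scale {scale a m | a m. a \<in> I}"
    by (rule module.span_base[OF assms(1)])
qed

theorem theorem3p3:
  fixes scale :: "'a::comm_ring_1 \<Rightarrow> 'b::ab_group_add \<Rightarrow> 'b"
  assumes "module scale"
  shows "dual_proper_strong_property_A scale \<longleftrightarrow>
           (dual_property_A scale \<and>
            (\<forall>m. maximal_ideal m \<longrightarrow> is_ideal (m \<inter> W_set scale)))"
proof
  assume D: "dual_proper_strong_property_A scale"
  have oneW: "1 \<notin> W_set scale"
  proof -
    have "\<And>y. y \<in> range (scale 1)"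
    proof -
      fix y
      have "y = scale 1 y" using module.scale_one[OF assms] by simp
      then show "y \<in> range (scale 1)" by (rule image_eqI) simp
    qed
    then have "range (scale 1) = UNIV" by blast
    then show ?thesis unfolding W_set_def by simp
  qed
  have "dual_property_A scale" unfolding dual_property_A_def
  proof (intro allI impI)
    fix I assume I: "is_ideal I \<and> fg_ideal I \<and> I \<subseteq> W_set scale"
    then have "\<exists>as. I = gen_ideal as" unfolding fg_ideal_def by simp
    then obtain as where as: "I = gen_ideal as" by (elim exE)
    have IW: "I \<subseteq> W_set scale" using I by simp
    have "1 \<notin> I" using IW oneW by (auto simp only: subset_iff)
    then have "gen_ideal as \<noteq> UNIV" using as by auto
    moreover have "set as \<subseteq> W_set scale"
    proof
      fix a assume "a \<in> set as"
      then have "a \<in> I" using as gen_ideal_mem by simp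
      then show "a \<in> W_set scale" using IW by (rule subsetD[rotated])
    qed
    ultimately have "ideal_mult scale (gen_ideal as) \<noteq> UNIV"
      using D[unfolded dual_proper_strong_property_A_def, rule_format, of as] by simp
    then show "ideal_mult scale I \<noteq> UNIV" using as by simp
  qed
  moreover have "\<forall>m. maximal_ideal m \<longrightarrow> is_ideal (m \<inter> W_set scale)"
  proof (intro allI impI)
    fix m :: "'a set" assume m: "maximal_ideal m"
    then have mi: "is_ideal m" and mU: "m \<noteq> UNIV" by (simp_all add: maximal_ideal_def)
    have zW: "0 \<in> W_set scale"
    proof (rule ccontr)
      assume "0 \<notin> W_set scale"
      then have R: "range (scale 0) = UNIV" unfolding W_set_def by blast
      have "range (scale 0) = {0}" using module.scale_zero_left[OF assms] by auto
      then have U: "(UNIV::'b set) = {0}" using R by simp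
      have "gen_ideal ([]::'a list) \<noteq> UNIV"
      proof
        assume "gen_ideal ([]::'a list) = UNIV"
        then have "(1::'a) \<in> gen_ideal []" by simp
        then show False unfolding gen_ideal_def by simp
      qed
      then have "ideal_mult scale (gen_ideal ([]::'a list)) \<noteq> UNIV"
        using D[unfolded dual_proper_strong_property_A_def, rule_format, of "[]"] by simp
      moreover have "ideal_mult scale (gen_ideal ([]::'a list)) = UNIV"
      proof -
        have "0 \<in> ideal_mult scale (gen_ideal ([]::'a list))"
          unfolding ideal_mult_def by (rule module.span_zero[OF assms])
        moreover have "\<And>z::'b. z = 0" using U by (metis UNIV_I singletonD)
        ultimately show ?thesis by (metis UNIV_eq_I)
      qed
      ultimately show False by contradiction
    qed
    show "is_ideal (m \<inter> W_set scale)" unfolding is_ideal_def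
    proof (intro conjI ballI allI)
      show "0 \<in> m \<inter> W_set scale" using zW ideal_zero[OF mi] by blast
    next
      fix x y assume x: "x \<in> m \<inter> W_set scale" and y: "y \<in> m \<inter> W_set scale"
      have "set [x, y] \<subseteq> m" using x y by simp
      then have "gen_ideal [x, y] \<subseteq> m" using mi gen_ideal_least[of m "[x,y]"] by blast
      then have "gen_ideal [x, y] \<noteq> UNIV" using mU by blast
      moreover have "set [x, y] \<subseteq> W_set scale" using x y by auto
      ultimately have ne: "ideal_mult scale (gen_ideal [x, y]) \<noteq> UNIV"
        using D[unfolded dual_proper_strong_property_A_def, rule_format, of "[x,y]"] by simp
      have "x \<in> gen_ideal [x, y]" "y \<in> gen_ideal [x, y]" using gen_ideal_mem[of _ "[x,y]"] by simp_all
      then have "x + y \<in> gen_ideal [x, y]" using ideal_add[OF gen_ideal_ideal] by blast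
      then have "range (scale (x + y)) \<subseteq> ideal_mult scale (gen_ideal [x, y])"
        by (rule range_sub_ideal_mult[OF assms])
      then have "x + y \<in> W_set scale" using ne unfolding W_set_def by blast
      moreover have "x + y \<in> m" using x y ideal_add[OF mi] by blast
      ultimately show "x + y \<in> m \<inter> W_set scale" by blast
    next
      fix r x assume x: "x \<in> m \<inter> W_set scale"
      have "range (scale (r * x)) \<subseteq> range (scale x)"
      proof
        fix z assume "z \<in> range (scale (r * x))"
        then obtain n where "z = scale (r * x) n" by blast
        then have "z = scale x (scale r n)" using module.scale_scale[OF assms] by (simp add: mult.commute)
        then show "z \<in> range (scale x)" by blast
      qed
      then have "r * x \<in> W_set scale" using x unfolding W_set_def by blast
      moreover have "r * x \<in> m" using x ideal_mul[OF mi] by blast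
      ultimately show "r * x \<in> m \<inter> W_set scale" by blast
    qed
  qed
  ultimately show "dual_property_A scale \<and> (\<forall>m. maximal_ideal m \<longrightarrow> is_ideal (m \<inter> W_set scale))" by blast
next
  assume R: "dual_property_A scale \<and> (\<forall>m. maximal_ideal m \<longrightarrow> is_ideal (m \<inter> W_set scale))"
  show "dual_proper_strong_property_A scale" unfolding dual_proper_strong_property_A_def
  proof (intro allI impI)
    fix as assume as: "gen_ideal as \<noteq> UNIV \<and> set as \<subseteq> W_set scale"
    have "\<exists>m. maximal_ideal m \<and> gen_ideal as \<subseteq> m"
      using as by (intro krull[OF gen_ideal_ideal]) simp
    then obtain m where m: "maximal_ideal m" "gen_ideal as \<subseteq> m" by blast
    have mW: "is_ideal (m \<inter> W_set scale)" using R m(1) by simp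
    have "set as \<subseteq> m" using m(2) gen_ideal_mem by blast
    moreover have "set as \<subseteq> W_set scale" using as by simp
    ultimately have "set as \<subseteq> m \<inter> W_set scale" by simp
    then have "gen_ideal as \<subseteq> m \<inter> W_set scale" using gen_ideal_least[OF mW] by simp
    then have "gen_ideal as \<subseteq> W_set scale" by blast
    moreover have "fg_ideal (gen_ideal as)" unfolding fg_ideal_def by blast
    moreover have "dual_property_A scale" using R by simp
    ultimately show "ideal_mult scale (gen_ideal as) \<noteq> UNIV"
      using gen_ideal_ideal[of as] unfolding dual_property_A_def by simp
  qed
qed

end
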